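(* Let $\lambda_1,\dots,\lambda_p>0$ be pairwise distinct, $\Sigma=\mathrm{diag}(\lambda_1,\dots,\lambda_p)$, $E$ a real symmetric $p\times p$ matrix, $\widehat\Sigma=\Sigma+E$, $x$ an eigenvalue of $\widehat\Sigma$, $k\in\arg\min_m|\lambda_m-x|$, and $q>0$. Suppose $$\|E(\nu(k))\|\le\frac12\qquad\text{and}\qquad \|E(\nu(k))\|\le \frac{q\sqrt{\delta_k}\,\nu_k(k)}{2\sqrt2}.$$ Then every eigenvector $\vec\eta$ of $\widehat\Sigma$ for $x$ satisfies $\langle\vec\eta,\vec\mu_k\rangle\neq0$, and the angle $\theta\in[0,\pi/2]$ between $\vec\eta$ and $\vec\mu_k$ (defined by $\cos\theta=|\langle\vec\eta,\vec\mu_k\rangle|/\|\vec\eta\|$) satisfies $\tan\theta\le q$, in particular $\sin\theta\le q$.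
   Context: $\vec\mu_1,\dots,\vec\mu_p$ are the standard basis vectors; $\|\cdot\|$ is the operator norm; $\delta_k=\min_{j\ne k}|\lambda_k-\lambda_j|$. For a vector $\nu\in[0,\infty)^p$, $E(\nu)=\mathrm{diag}(\nu)E\,\mathrm{diag}(\nu)$. The vector $\nu(k)$ is defined by $\nu_j(k)=\sqrt2\,|\lambda_j-\lambda_k|^{-1/2}$ for $j\ne k$ and $\nu_k(k)=\max_{j\ne k}\sqrt{\lambda_j/(|\lambda_j-\lambda_k|\,\lambda_k)}$. *)

theory Defs
  imports "HOL-Analysis.Analysis"
begin

definition diag_mat :: "('n::finite \<Rightarrow> real) \<Rightarrow> real ^ 'n ^ 'n" where
  "diag_mat lam = (\<chi> i j. if i = j then lam i else 0)"

definition op_norm :: "real ^ 'n ^ 'n \<Rightarrow> real" where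
  "op_norm A = onorm (\<lambda>v. A *v v)"

definition scaled_mat :: "('n::finite \<Rightarrow> real) \<Rightarrow> real ^ 'n ^ 'n \<Rightarrow> real ^ 'n ^ 'n" where
  "scaled_mat nu E = diag_mat nu ** E ** diag_mat nu"

definition gap :: "('n::finite \<Rightarrow> real) \<Rightarrow> 'n \<Rightarrow> real" where
  "gap lam k = Min {\<bar>lam k - lam j\<bar> | j. j \<noteq> k}"

definition nu_vec :: "('n::finite \<Rightarrow> real) \<Rightarrow> 'n \<Rightarrow> 'n \<Rightarrow> real" where
  "nu_vec lam k j =
     (if j \<noteq> k then sqrt 2 * \<bar>lam j - lam k\<bar> powr (-1/2)
      else Max {sqrt (lam i / (\<bar>lam i - lam k\<bar> * lam k)) | i. i \<noteq> k})"

end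

theory Submission
  imports Defs
begin

lemma diag_mult: "(diag_mat d *v v) $ i = d i * v $ i"
  unfolding diag_mat_def matrix_vector_mult_def
  by (simp add: if_distrib[of "\<lambda>y. y * _"] cong: if_cong)

lemma nu_sq:
  assumes "j \<noteq> k" "inj lam"
  shows "(nu_vec lam k j)^2 = 2 / \<bar>lam j - lam k\<bar>"
proof -
  have d: "\<bar>lam j - lam k\<bar> > 0" using assms by (auto simp: inj_def)
  have "\<bar>lam j - lam k\<bar> powr (-1/2) = 1 / sqrt \<bar>lam j - lam k\<bar>"
    using d by (simp add: powr_minus_divide powr_half_sqrt)
  then show ?thesis using assms d
    by (simp add: nu_vec_def power_mult_distrib power_divide)
qed

lemma bl_mat: "bounded_linear (\<lambda>v. (A::real^'n::finite^'n) *v v)"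
  by (simp add: linear_conv_bounded_linear matrix_vector_mul_linear)

theorem mainTheorem6:
  fixes lam :: "'n::finite \<Rightarrow> real"
    and E :: "real ^ 'n ^ 'n"
    and x q :: real
    and k :: 'n
  assumes p2: "CARD('n) \<ge> 2"
    and pos: "\<And>i. lam i > 0"
    and distinct: "inj lam"
    and symm: "transpose E = E"
    and eig: "\<exists>v. v \<noteq> 0 \<and> (diag_mat lam + E) *v v = x *\<^sub>R v"
    and kmin: "\<And>m. \<bar>lam k - x\<bar> \<le> \<bar>lam m - x\<bar>"
    and qpos: "q > 0"
    and h1: "op_norm (scaled_mat (nu_vec lam k) E) \<le> 1/2"
    and h2: "op_norm (scaled_mat (nu_vec lam k) E)
               \<le> q * sqrt (gap lam k) * nu_vec lam k k / (2 * sqrt 2)"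
  shows "\<forall>\<eta>. \<eta> \<noteq> 0 \<and> (diag_mat lam + E) *v \<eta> = x *\<^sub>R \<eta> \<longrightarrow>
           \<eta> \<bullet> axis k 1 \<noteq> 0 \<and>
           (let \<theta> = arccos (\<bar>\<eta> \<bullet> axis k 1\<bar> / norm \<eta>) in tan \<theta> \<le> q \<and> sin \<theta> \<le> q)"
proof (intro allI impI)
  fix \<eta> :: "real^'n"
  assume H: "\<eta> \<noteq> 0 \<and> (diag_mat lam + E) *v \<eta> = x *\<^sub>R \<eta>"
  define \<nu> where "\<nu> = nu_vec lam k"
  define D where "D = diag_mat \<nu>"
  define F where "F = scaled_mat \<nu> E"
  define L where "L = op_norm F"
  define \<delta> where "\<delta> = gap lam k"
  define w where "w = (\<chi> j. \<eta> $ j / \<nu> j)"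
  define a where "a = w $ k"
  define K where "K = UNIV - {k}"
  define N where "N = (\<Sum>j\<in>K. (w $ j)^2)"
  define M where "M = (\<Sum>j\<in>K. (\<eta> $ j)^2)"
  obtain j0 where j0: "j0 \<noteq> k"
  proof -
    have "\<not> (UNIV::'n set) \<subseteq> {k}"
    proof
      assume "(UNIV::'n set) \<subseteq> {k}"
      then have "card (UNIV::'n set) \<le> card {k}" by (intro card_mono) auto
      with p2 show False by simp
    qed
    then show ?thesis using that by blast
  qed
  have Sfin: "finite {\<bar>lam k - lam j\<bar> | j. j \<noteq> k}" by simp
  have Sne: "{\<bar>lam k - lam j\<bar> | j. j \<noteq> k} \<noteq> {}" using j0 by blast
  have dpos: "\<delta> > 0"
  proof -
    have "\<delta> \<in> {\<bar>lam k - lam j\<bar> | j. j \<noteq> k}" unfolding \<delta>_def gap_def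
      using Min_in[OF Sfin Sne] by simp
    then show ?thesis using distinct by (auto simp: inj_def)
  qed
  have dle: "\<delta> \<le> \<bar>lam j - lam k\<bar>" if "j \<noteq> k" for j
  proof -
    have "\<delta> \<le> \<bar>lam k - lam j\<bar>" unfolding \<delta>_def gap_def
      using Min_le[OF Sfin] that by blast
    then show ?thesis by simp
  qed
  have nuk: "\<nu> k > 0"
  proof -
    have fin: "finite {sqrt (lam i / (\<bar>lam i - lam k\<bar> * lam k)) | i. i \<noteq> k}" by simp
    have ne: "{sqrt (lam i / (\<bar>lam i - lam k\<bar> * lam k)) | i. i \<noteq> k} \<noteq> {}" using j0 by blast
    have "\<nu> k \<in> {sqrt (lam i / (\<bar>lam i - lam k\<bar> * lam k)) | i. i \<noteq> k}"
      unfolding \<nu>_def nu_vec_def using Max_in[OF fin ne] by simp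
    then obtain i where i: "i \<noteq> k" "\<nu> k = sqrt (lam i / (\<bar>lam i - lam k\<bar> * lam k))" by blast
    have "\<bar>lam i - lam k\<bar> > 0" using i distinct by (auto simp: inj_def)
    then show ?thesis using i pos[of i] pos[of k] by simp
  qed
  have nusq: "(\<nu> j)^2 = 2 / \<bar>lam j - lam k\<bar>" if "j \<noteq> k" for j
    unfolding \<nu>_def using nu_sq[OF that distinct] .
  have nupos: "\<nu> j > 0" for j
  proof (cases "j = k")
    case True then show ?thesis using nuk by simp
  next
    case False
    have "\<bar>lam j - lam k\<bar> > 0" using False distinct by (auto simp: inj_def)
    then show ?thesis using False unfolding \<nu>_def nu_vec_def by simp
  qed
  have nuge: "(\<nu> j)^2 * \<bar>x - lam j\<bar> \<ge> 1" if "j \<noteq> k" for j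
  proof -
    have d: "\<bar>lam j - lam k\<bar> > 0" using that distinct by (auto simp: inj_def)
    have "\<bar>lam j - lam k\<bar> \<le> 2 * \<bar>x - lam j\<bar>" using kmin[of j] by (auto simp: abs_if split: if_splits)
    then show ?thesis using d by (simp add: nusq[OF that] field_simps)
  qed
  have nule: "(\<nu> j)^2 \<le> 2 / \<delta>" if "j \<noteq> k" for j
    using nusq[OF that] dle[OF that] dpos by (simp add: frac_le)
  have eta_w: "\<eta> $ j = \<nu> j * w $ j" for j
    using nupos[of j] by (simp add: w_def)
  have Dw: "D *v w = \<eta>"
    by (simp add: vec_eq_iff D_def diag_mult eta_w)
  have Eeta: "(E *v \<eta>) $ j = (x - lam j) * \<eta> $ j" for j
  proof -
    have "((diag_mat lam + E) *v \<eta>) $ j = x * \<eta> $ j" using H by simp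
    then show ?thesis
      by (simp add: matrix_vector_mult_add_rdistrib diag_mult algebra_simps)
  qed
  have Fw: "(F *v w) $ j = (\<nu> j)^2 * (x - lam j) * w $ j" for j
  proof -
    have "F *v w = D *v (E *v (D *v w))"
      by (simp add: F_def scaled_mat_def D_def matrix_vector_mul_assoc matrix_mul_assoc)
    then show ?thesis using Dw by (simp add: D_def diag_mult Eeta eta_w power2_eq_square)
  qed
  have Lnn: "L \<ge> 0" unfolding L_def op_norm_def using onorm_pos_le[OF bl_mat] .
  have nw: "(norm w)^2 = a^2 + N"
  proof -
    have "(norm w)^2 = (\<Sum>j\<in>UNIV. (w $ j)^2)"
      by (simp only: power2_norm_eq_inner inner_vec_def) (simp add: power2_eq_square)
    also have "\<dots> = a^2 + N" unfolding a_def N_def K_def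
      by (simp add: sum.remove[of UNIV k] Compl_eq_Diff_UNIV[symmetric])
    finally show ?thesis .
  qed
  have nF: "(norm (F *v w))^2 = (\<Sum>j\<in>UNIV. ((F *v w) $ j)^2)"
    by (simp only: power2_norm_eq_inner inner_vec_def) (simp add: power2_eq_square)
  have N1: "N \<le> (\<Sum>j\<in>K. ((F *v w) $ j)^2)" unfolding N_def
  proof (rule sum_mono)
    fix j assume "j \<in> K"
    then have jk: "j \<noteq> k" by (simp add: K_def)
    have "\<bar>w $ j\<bar> \<le> (\<nu> j)^2 * \<bar>x - lam j\<bar> * \<bar>w $ j\<bar>"
      using nuge[OF jk] by (simp add: mult_le_cancel_right1)
    also have "\<dots> = \<bar>(F *v w) $ j\<bar>" by (simp add: Fw abs_mult)
    finally show "(w $ j)^2 \<le> ((F *v w) $ j)^2"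
      by (metis abs_ge_zero power_mono power2_abs)
  qed
  also have "\<dots> \<le> (\<Sum>j\<in>UNIV. ((F *v w) $ j)^2)"
    by (rule sum_mono2) auto
  also have "\<dots> = (norm (F *v w))^2" using nF by simp
  also have "\<dots> \<le> (L * norm w)^2"
    using onorm[OF bl_mat[of F], of w] unfolding L_def op_norm_def
    by (simp add: power_mono)
  finally have N2: "N \<le> L^2 * (a^2 + N)" by (simp add: power_mult_distrib nw)
  define s where "s = sqrt N"
  have Nnn: "N \<ge> 0" unfolding N_def by (simp add: sum_nonneg)
  have sN: "s^2 = N" "s \<ge> 0" using Nnn by (auto simp: s_def)
  have s1: "s \<le> L * sqrt (a^2 + N)"
  proof -
    have "sqrt N \<le> sqrt (L^2 * (a^2 + N))" using N2 by simp
    then show ?thesis using Lnn by (simp add: s_def real_sqrt_mult)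
  qed
  have "sqrt (a^2 + N) \<le> \<bar>a\<bar> + s"
  proof -
    have "a^2 + N \<le> (\<bar>a\<bar> + s)^2" using sN by (simp add: power2_sum)
    then have "sqrt (a^2 + N) \<le> sqrt ((\<bar>a\<bar> + s)^2)" by (rule real_sqrt_le_mono)
    then show ?thesis using sN by simp
  qed
  then have s2: "s \<le> L * (\<bar>a\<bar> + s)" using s1 Lnn
    by (meson mult_left_mono order_trans)
  have Lh: "L \<le> 1/2" using h1 by (simp add: L_def F_def \<nu>_def)
  have sa: "s \<le> \<bar>a\<bar>"
  proof -
    have "L * (\<bar>a\<bar> + s) \<le> 1/2 * (\<bar>a\<bar> + s)" using Lh sN
      by (intro mult_right_mono) auto
    then have "s \<le> 1/2 * (\<bar>a\<bar> + s)" using s2 by (rule_tac order_trans[OF s2]) 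
    then show ?thesis by (simp add: field_simps)
  qed
  have s3: "s \<le> 2 * L * \<bar>a\<bar>"
  proof -
    have "L * s \<le> L * \<bar>a\<bar>" using sa Lnn by (simp add: mult_left_mono)
    then show ?thesis using s2 by (simp add: algebra_simps)
  qed
  have a0: "a \<noteq> 0"
  proof
    assume "a = 0"
    then have "s = 0" using sa sN by simp
    then have "N = 0" using sN by simp
    then have "\<forall>j\<in>K. (w $ j)^2 = 0" unfolding N_def
      by (subst sum_nonneg_eq_0_iff[symmetric]) auto
    then have "w = 0" using \<open>a = 0\<close> by (auto simp: vec_eq_iff K_def a_def)
    then have "\<eta> = 0" using Dw by simp
    with H show False by simp
  qed
  have etak: "\<eta> $ k = \<nu> k * a" using eta_w by (simp add: a_def)
  have etak0: "\<eta> $ k \<noteq> 0" using etak a0 nuk by simp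
  have Mle: "M \<le> 2 / \<delta> * N" unfolding M_def N_def sum_distrib_left
  proof (rule sum_mono)
    fix j assume "j \<in> K"
    then have jk: "j \<noteq> k" by (simp add: K_def)
    show "(\<eta> $ j)^2 \<le> 2 / \<delta> * (w $ j)^2"
    proof -
      have "(\<nu> j)^2 * (w $ j)^2 \<le> 2 / \<delta> * (w $ j)^2"
        using nule[OF jk] by (rule mult_right_mono) simp
      then show ?thesis by (simp add: eta_w power_mult_distrib)
    qed
  qed
  have Mnn: "M \<ge> 0" unfolding M_def by (simp add: sum_nonneg)
  have sM: "sqrt M \<le> sqrt 2 / sqrt \<delta> * s"
  proof -
    have "sqrt M \<le> sqrt (2 / \<delta> * N)" using Mle by simp
    then show ?thesis by (simp add: s_def real_sqrt_mult real_sqrt_divide)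
  qed
  have h2': "L \<le> q * sqrt \<delta> * \<nu> k / (2 * sqrt 2)"
    using h2 by (simp add: L_def F_def \<nu>_def \<delta>_def)
  have sqM: "sqrt M \<le> q * \<bar>\<eta> $ k\<bar>"
  proof -
    have c: "sqrt 2 / sqrt \<delta> \<ge> 0" using dpos by simp
    have "sqrt M \<le> sqrt 2 / sqrt \<delta> * (2 * L * \<bar>a\<bar>)"
      using sM s3 c by (meson mult_left_mono order_trans)
    also have "\<dots> \<le> sqrt 2 / sqrt \<delta> * (2 * (q * sqrt \<delta> * \<nu> k / (2 * sqrt 2)) * \<bar>a\<bar>)"
      using h2' c by (intro mult_left_mono mult_right_mono) auto
    also have "\<dots> = q * \<nu> k * \<bar>a\<bar>" using dpos by (simp add: field_simps)
    also have "\<dots> = q * \<bar>\<eta> $ k\<bar>" using nuk by (simp add: etak abs_mult)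
    finally show ?thesis .
  qed
  have neta: "(norm \<eta>)^2 = (\<eta> $ k)^2 + M"
  proof -
    have "(norm \<eta>)^2 = (\<Sum>j\<in>UNIV. (\<eta> $ j)^2)"
      by (simp only: power2_norm_eq_inner inner_vec_def) (simp add: power2_eq_square)
    also have "\<dots> = (\<eta> $ k)^2 + M" unfolding M_def K_def
      by (simp add: sum.remove[of UNIV k] Compl_eq_Diff_UNIV[symmetric])
    finally show ?thesis .
  qed
  have npos: "norm \<eta> > 0" using H by simp
  define c where "c = \<bar>\<eta> $ k\<bar> / norm \<eta>"
  have cpos: "c > 0" using etak0 npos by (simp add: c_def)
  have ak_le: "\<bar>\<eta> $ k\<bar> \<le> norm \<eta>"
    by (metis component_le_norm_cart)
  have c1: "c \<le> 1" using ak_le npos by (simp add: c_def)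
  have omc: "1 - c^2 = M / (norm \<eta>)^2"
  proof -
    have n2: "(norm \<eta>)^2 > 0" using npos by simp
    have "c^2 = (\<eta> $ k)^2 / (norm \<eta>)^2" by (simp add: c_def power_divide)
    then have "1 - c^2 = ((norm \<eta>)^2 - (\<eta> $ k)^2) / (norm \<eta>)^2"
      using n2 by (simp add: diff_divide_distrib)
    then show ?thesis using neta by simp
  qed
  have sinv: "sin (arccos c) = sqrt M / norm \<eta>"
    using c1 cpos omc by (simp add: sin_arccos real_sqrt_divide)
  have cosv: "cos (arccos c) = c" using c1 cpos by (simp add: cos_arccos)
  have tanv: "tan (arccos c) = sqrt M / \<bar>\<eta> $ k\<bar>"
    using sinv cosv npos etak0 by (simp add: tan_def c_def)
  have T: "tan (arccos c) \<le> q"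
    using sqM etak0 by (simp add: tanv divide_le_eq)
  have S: "sin (arccos c) \<le> q"
  proof -
    have "sqrt M / norm \<eta> \<le> sqrt M / \<bar>\<eta> $ k\<bar>"
      using ak_le etak0 Mnn npos by (intro divide_left_mono) auto
    then show ?thesis using T sinv tanv by simp
  qed
  show "\<eta> \<bullet> axis k 1 \<noteq> 0 \<and>
           (let \<theta> = arccos (\<bar>\<eta> \<bullet> axis k 1\<bar> / norm \<eta>) in tan \<theta> \<le> q \<and> sin \<theta> \<le> q)"
    using etak0 T S by (simp add: inner_axis c_def)
qed

end
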